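(* Let $(G_0,\mathfrak g)$ be a super Poincaré group. Then $\Gamma=\{p\mid\Phi_p\ge0\}$, i.e. for any $p\in\mathbb R^{1,D-1}$, $\Phi_p\ge0$ if and only if $p_0\ge0$ and $\langle p,p\rangle\ge0$. Moreover, if $p_0>0$ and $\langle p,p\rangle>0$, then $\Phi_p>0$ (positive definite).
   Context: A super Poincaré group is a super Lie group $(G_0,\mathfrak g)$ (a real Lie group $G_0$ and finite-dimensional real super Lie algebra $\mathfrak g=\mathfrak g_0\oplus\mathfrak g_1$, $\mathfrak g_0=\mathrm{Lie}(G_0)$, $G_0$ acting on $\mathfrak g$ by even automorphisms extending Ad with differential ad) with $G_0=T_0\rtimes L_0$, $T_0=\mathbb R^{1,D-1}$, $D\ge4$, $\langle x,x'\rangle=x_0x'_0-\sum_{j\ge1}x_jx'_j$, $L_0=\mathrm{Spin}(1,D-1)$ acting on $T_0$ via its covering of $\mathrm{SO}_0(1,D-1)$, $\mathfrak g_1$ a real spinorial $L_0$-module (its complexification a direct sum of complex spin representations), $T_0$ acting trivially on $\mathfrak g_1$, $[\mathfrak g_1,\mathfrak g_1]\subset\mathfrak t_0$, and $\langle[X,X],x\rangle>0$ for all $0\neq X\in\mathfrak g_1$, $x\in\Gamma^+=\{x:\langle x,x\rangle>0,x_0>0\}$. $\Gamma=\{p:\langle p,p\rangle\ge0,p_0\ge0\}$. For $p\in\mathbb R^{1,D-1}$ (identified with $T_0^\ast$ via $\langle\cdot,\cdot\rangle$), $\Phi_p(X,Y)=\frac12\langle[X,Y],p\rangle$ on $\mathfrak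 g_1$, and $\Phi_p\ge0$ means $\Phi_p(X,X)\ge0$ for all $X$. *)

theory Defs
  imports "HOL-Analysis.Analysis" "HOL-Algebra.Group"
begin

text \<open>Minkowski space R^{1,D-1} is modelled as real^('s option): the index None is the
  time coordinate x_0, the indices Some i (i :: 's) are the D-1 spatial coordinates,
  so D = CARD('s) + 1.\<close>

definition mink :: "real^('s::finite option) \<Rightarrow> real^('s option) \<Rightarrow> real" where
  "mink x y = x $ None * y $ None - (\<Sum>i\<in>UNIV. x $ Some i * y $ Some i)"

definition lorentz_group :: "(real^('s::finite option)^('s option)) set" where
  "lorentz_group = {A. \<forall>x y. mink (A *v x) (A *v y) = mink x y}"

definition SO0 :: "(real^('s::finite option)^('s option)) set" where
  "SO0 = connected_component_set lorentz_group (mat 1)"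

definition Gamma :: "(real^('s::finite option)) set" where
  "Gamma = {p. mink p p \<ge> 0 \<and> p $ None \<ge> 0}"

definition Gamma_plus :: "(real^('s::finite option)) set" where
  "Gamma_plus = {x. mink x x > 0 \<and> x $ None > 0}"

definition Phi :: "('a \<Rightarrow> 'a \<Rightarrow> real^('s::finite option)) \<Rightarrow> real^('s option) \<Rightarrow> 'a \<Rightarrow> 'a \<Rightarrow> real" where
  "Phi br p X Y = (1/2) * mink (br X Y) p"

end

theory Submission
  imports Defs
begin

definition spat :: "real^('s::finite option) \<Rightarrow> real^'s" where
  "spat x = (\<chi> i. x $ Some i)"

definition mkv :: "real \<Rightarrow> real^('s::finite) \<Rightarrow> real^('s option)" where
  "mkv t X = (\<chi> i. case i of None \<Rightarrow> t | Some j \<Rightarrow> X $ j)"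

lemma mkv_None[simp]: "mkv t X $ None = t" by (simp add: mkv_def)
lemma mkv_Some[simp]: "mkv t X $ Some j = X $ j" by (simp add: mkv_def)
lemma spat_mkv[simp]: "spat (mkv t X) = X" by (simp add: spat_def vec_eq_iff)
lemma mkv_eta: "mkv (x $ None) (spat x) = x"
  by (simp add: vec_eq_iff spat_def mkv_def split: option.splits)

lemma mink_alt: "mink x y = x $ None * y $ None - spat x \<bullet> spat y"
  by (simp add: mink_def inner_vec_def spat_def)

lemma mink_mkv[simp]: "mink (mkv t X) (mkv s Y) = t * s - X \<bullet> Y"
  by (simp add: mink_alt)

lemma sum_option: "(\<Sum>i\<in>(UNIV::'s::finite option set). f i) = f None + (\<Sum>j\<in>UNIV. f (Some j))"
  by (simp add: UNIV_option_conv sum.reindex)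

definition gam :: "real^('s::finite) \<Rightarrow> real" where
  "gam q = sqrt (1 + q \<bullet> q)"

lemma gam_ge1: "gam q \<ge> 1"
  by (simp add: gam_def)

lemma gam_sq: "(gam q)^2 = 1 + q \<bullet> q"
  by (simp add: gam_def)


lemma alg: fixes g a b x0 y0 s n :: real
  assumes "g \<ge> 1" "n = g*g - 1"
  shows "(g * x0 + a) * (g * y0 + b) -
    (s + (y0 + b/(g+1)) * a + (x0 + a/(g+1)) * b
      + (x0 + a/(g+1)) * (y0 + b/(g+1)) * n) = x0 * y0 - s"
proof -
  have h: "g + 1 \<noteq> 0" using assms by simp
  define A where "A = x0 + a/(g+1)"
  define B where "B = y0 + b/(g+1)"
  have a: "a = (A - x0) * (g+1)" using h unfolding A_def by (simp add: field_simps)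
  have b: "b = (B - y0) * (g+1)" using h unfolding B_def by (simp add: field_simps)
  show ?thesis unfolding A_def[symmetric] B_def[symmetric] unfolding a b assms(2)
    by (simp add: algebra_simps)
qed

definition bmat :: "real^('s::finite) \<Rightarrow> real^('s option)^('s option)" where
  "bmat q = (\<chi> i j. case i of
      None \<Rightarrow> (case j of None \<Rightarrow> gam q | Some j' \<Rightarrow> q $ j')
    | Some i' \<Rightarrow> (case j of None \<Rightarrow> q $ i' | Some j' \<Rightarrow> (if i' = j' then 1 else 0) + q $ i' * q $ j' / (gam q + 1)))"

lemma bmat_mult: "bmat q *v x = mkv (gam q * x $ None + q \<bullet> spat x)
     (spat x + (x $ None + (q \<bullet> spat x) / (gam q + 1)) *\<^sub>R q)"
proof -
  have "(bmat q *v x) $ i = mkv (gam q * x $ None + q \<bullet> spat x)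
     (spat x + (x $ None + (q \<bullet> spat x) / (gam q + 1)) *\<^sub>R q) $ i" for i
  proof (cases i)
    case None
    then show ?thesis
      by (simp add: matrix_vector_mult_def sum_option bmat_def inner_vec_def spat_def)
  next
    case (Some i')
    have "(\<Sum>j\<in>UNIV. ((if i' = j then 1 else 0) + q $ i' * q $ j / (gam q + 1)) * x $ Some j)
       = x $ Some i' + q $ i' * (\<Sum>j\<in>UNIV. q $ j * x $ Some j) / (gam q + 1)"
    proof -
      have d: "(\<Sum>j\<in>UNIV. x $ Some j * (if i' = j then 1 else 0)) = x $ Some i'"
        by (simp add: if_distrib[of "\<lambda>u. _ * u"] cong: if_cong)
      show ?thesis
        by (simp add: algebra_simps sum.distrib sum_distrib_left sum_divide_distrib d)
    qed
    then show ?thesis using Some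
      by (simp add: matrix_vector_mult_def sum_option bmat_def inner_vec_def spat_def algebra_simps)
  qed
  then show ?thesis by (simp add: vec_eq_iff)
qed

lemma bmat_lorentz: "mink (bmat q *v x) (bmat q *v y) = mink x y"
proof -
  define g where "g = gam q"
  define a where "a = q \<bullet> spat x"
  define b where "b = q \<bullet> spat y"
  define n where "n = q \<bullet> q"
  have gn: "g^2 = 1 + n" unfolding g_def n_def by (rule gam_sq)
  have g1: "g \<ge> 1" unfolding g_def by (rule gam_ge1)
  have "mink (bmat q *v x) (bmat q *v y) =
    (g * x $ None + a) * (g * y $ None + b) -
    (spat x \<bullet> spat y + (y $ None + b/(g+1)) * a + (x $ None + a/(g+1)) * b
      + (x $ None + a/(g+1)) * (y $ None + b/(g+1)) * n)"
    by (simp add: bmat_mult g_def a_def b_def n_def inner_add_left inner_add_right inner_commute algebra_simps)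
  also have "\<dots> = x $ None * y $ None - spat x \<bullet> spat y"
    using alg[OF g1, of n] gn by (simp add: power2_eq_square)
  finally show ?thesis by (simp add: mink_alt)
qed


lemma bmat_zero: "bmat 0 = mat 1"
  by (simp add: vec_eq_iff bmat_def mat_def gam_def split: option.splits)

lemma bmat_lorentz_group: "bmat q \<in> lorentz_group"
  by (simp add: lorentz_group_def bmat_lorentz)

lemma bmat_SO0: "bmat q \<in> SO0"
proof -
  let ?T = "(\<lambda>s::real. bmat (s *\<^sub>R q)) ` {0..1}"
  have c: "continuous_on {0..1} (\<lambda>s::real. bmat (s *\<^sub>R q))"
    unfolding bmat_def gam_def
  proof (intro continuous_on_vec_lambda)
    fix i j :: "'a option"
    show "continuous_on {0..1} (\<lambda>s::real. case i of
      None \<Rightarrow> (case j of None \<Rightarrow> sqrt (1 + (s *\<^sub>R q) \<bullet> (s *\<^sub>R q)) | Some j' \<Rightarrow> (s *\<^sub>R q) $ j')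
    | Some i' \<Rightarrow> (case j of None \<Rightarrow> (s *\<^sub>R q) $ i' | Some j' \<Rightarrow> (if i' = j' then 1 else 0) + (s *\<^sub>R q) $ i' * (s *\<^sub>R q) $ j' / (sqrt (1 + (s *\<^sub>R q) \<bullet> (s *\<^sub>R q)) + 1)))"
    proof (cases i; cases j)
      fix i' j' assume "i = Some i'" "j = Some j'"
      moreover have "sqrt (1 + (s *\<^sub>R q) \<bullet> (s *\<^sub>R q)) + 1 \<noteq> 0" for s
        using real_sqrt_ge_zero[of "1 + (s *\<^sub>R q) \<bullet> (s *\<^sub>R q)"] inner_ge_zero[of "s *\<^sub>R q"] by linarith
      ultimately show ?thesis
        by (auto intro!: continuous_intros)
    qed (auto intro!: continuous_intros)
  qed
  have "connected ?T" by (rule connected_continuous_image[OF c]) simp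
  moreover have "?T \<subseteq> lorentz_group" using bmat_lorentz_group by auto
  moreover have "mat 1 \<in> ?T" by (rule image_eqI[where x=0]) (simp_all add: bmat_zero)
  moreover have "bmat q \<in> ?T" by (auto intro!: image_eqI[where x=1])
  ultimately show ?thesis unfolding SO0_def using connected_componentI by blast
qed


lemma mink_bmat: "mink (bmat q *v v) p = (gam q * v$None + q \<bullet> spat v) * p$None
   - (spat v \<bullet> spat p + (v$None + (q \<bullet> spat v)/(gam q + 1)) * (q \<bullet> spat p))"
  by (simp add: bmat_mult mink_alt inner_add_left)

lemma bound_lemma:
  fixes g t v0 p0 a b c :: real
  assumes g1: "g \<ge> 1" and gt: "g^2 = 1 + t^2" and t0: "t \<ge> 0"
  shows "(g * v0 + t * b) * p0 - (c + (v0 + (t * b)/(g+1)) * (t * a))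
     \<le> t * ((v0 + b) * (p0 - a)) + \<bar>v0 * p0 - a * b\<bar> + \<bar>a * b - c\<bar>"
proof -
  have h: "g + 1 \<noteq> 0" using g1 by simp
  have tt: "t * t = (g - 1) * (g + 1)" using gt by (simp add: power2_eq_square algebra_simps)
  have e: "(t * b)/(g+1) * (t * a) = (g - 1) * (a * b)"
  proof -
    have "(t * b)/(g+1) * (t * a) = (t * t) * (a * b) / (g+1)" by (simp add: algebra_simps)
    also have "\<dots> = (g - 1) * (a * b)" using h unfolding tt by simp
    finally show ?thesis .
  qed
  have gle: "g \<le> t + 1"
  proof -
    have "g^2 \<le> (t+1)^2" using gt t0 by (simp add: power2_eq_square algebra_simps)
    then show ?thesis using t0 g1 by (simp add: power_mono_iff)
  qed
  have gge: "t \<le> g"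
  proof -
    have "t^2 \<le> g^2" using gt by simp
    then show ?thesis using t0 g1 by (simp add: power_mono_iff)
  qed
  have f: "(g * v0 + t * b) * p0 - (c + (v0 + (t * b)/(g+1)) * (t * a))
     = g * (v0 * p0 - a * b) + t * (b * p0 - v0 * a) + (a * b - c)"
  proof -
    have "(g * v0 + t * b) * p0 - (c + (v0 + (t * b)/(g+1)) * (t * a))
      = g * v0 * p0 + t * b * p0 - c - v0 * t * a - (t * b)/(g+1) * (t * a)"
      by (simp add: algebra_simps)
    also have "\<dots> = g * (v0 * p0 - a * b) + t * (b * p0 - v0 * a) + (a * b - c)"
      unfolding e by (simp add: algebra_simps)
    finally show ?thesis .
  qed
  have "g * (v0 * p0 - a * b) \<le> t * (v0 * p0 - a * b) + \<bar>v0 * p0 - a * b\<bar>"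
  proof -
    have "(g - t) * (v0 * p0 - a * b) \<le> \<bar>v0 * p0 - a * b\<bar>"
    proof -
      have "(g - t) * (v0 * p0 - a * b) \<le> \<bar>(g - t) * (v0 * p0 - a * b)\<bar>" by simp
      also have "\<dots> = (g - t) * \<bar>v0 * p0 - a * b\<bar>" using gge by (simp add: abs_mult)
      also have "\<dots> \<le> 1 * \<bar>v0 * p0 - a * b\<bar>" using gle gge by (intro mult_right_mono) auto
      finally show ?thesis by simp
    qed
    then show ?thesis by (simp add: algebra_simps)
  qed
  then show ?thesis unfolding f by (simp add: algebra_simps)
qed

lemma mkv_Gamma_plus: "t > 0 \<Longrightarrow> X \<bullet> X < t^2 \<Longrightarrow> mkv t X \<in> Gamma_plus"
  by (simp add: Gamma_plus_def power2_eq_square)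

lemma cone_props:
  fixes v :: "real^('s::finite option)"
  assumes H: "\<forall>x\<in>Gamma_plus. mink v x > 0"
  shows "v$None > 0" "norm (spat v) \<le> v$None"
proof -
  have "mkv 1 (0::real^'s) \<in> Gamma_plus" by (rule mkv_Gamma_plus) simp_all
  then have "mink v (mkv 1 (0::real^'s)) > 0" using H by blast
  then show v0: "v$None > 0" by (simp add: mink_alt)
  show "norm (spat v) \<le> v$None"
  proof (rule ccontr)
    assume "\<not> ?thesis"
    then have lt: "v$None < norm (spat v)" by simp
    define N where "N = norm (spat v)"
    define e where "e = N * (N - v$None) / v$None"
    have Npos: "N > 0" using lt v0 unfolding N_def by linarith
    have epos: "e > 0" unfolding e_def using Npos lt v0 N_def by simp
    have "mkv (N + e) (spat v) \<in> Gamma_plus"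
    proof (rule mkv_Gamma_plus)
      show "N + e > 0" using Npos epos by simp
      have "spat v \<bullet> spat v = N^2" by (simp add: N_def dot_square_norm)
      also have "\<dots> < (N + e)^2" using Npos epos by (simp add: power_strict_mono)
      finally show "spat v \<bullet> spat v < (N + e)^2" .
    qed
    then have "mink v (mkv (N + e) (spat v)) > 0" using H by blast
    moreover have "mink v (mkv (N + e) (spat v)) = 0"
    proof -
      have "mink v (mkv (N + e) (spat v)) = v$None * (N + e) - N^2"
        by (simp add: mink_alt N_def dot_square_norm)
      also have "\<dots> = 0" unfolding e_def using v0 by (simp add: field_simps power2_eq_square)
      finally show ?thesis .
    qed
    ultimately show False by simp
  qed
qed

lemma gamma_dir:
  fixes c p :: "real^('s::finite option)"
  assumes H: "\<forall>x\<in>Gamma_plus. mink c x > 0" and p: "p$None \<ge> 0" "mink p p \<ge> 0"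
  shows "mink c p \<ge> 0"
proof (rule ccontr)
  assume "\<not> ?thesis"
  then have m: "mink c p < 0" by simp
  define e where "e = - mink c p / (\<bar>c$None\<bar> + 1)"
  have epos: "e > 0" unfolding e_def using m by (intro divide_pos_pos) auto
  have "mkv (p$None + e) (spat p) \<in> Gamma_plus"
  proof (rule mkv_Gamma_plus)
    show "p$None + e > 0" using p epos by simp
    have "spat p \<bullet> spat p \<le> (p$None)^2" using p(2) by (simp add: mink_alt power2_eq_square)
    also have "\<dots> < (p$None + e)^2" using p epos by (simp add: power_strict_mono)
    finally show "spat p \<bullet> spat p < (p$None + e)^2" .
  qed
  then have "mink c (mkv (p$None + e) (spat p)) > 0" using H by blast
  moreover have "mink c (mkv (p$None + e) (spat p)) = mink c p + e * c$None"
    by (simp add: mink_alt algebra_simps)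
  moreover have "e * c$None \<le> e * \<bar>c$None\<bar>" using epos by (simp add: mult_left_mono)
  moreover have "e * (\<bar>c$None\<bar> + 1) = - mink c p" unfolding e_def by simp
  then have "e * \<bar>c$None\<bar> + e = - mink c p" by (simp add: algebra_simps)
  ultimately show False using epos by linarith
qed


lemma choose_w:
  fixes P V :: "real^'s::finite"
  assumes card: "CARD('s) \<ge> 2" and pP: "p0 < norm P" and VV: "norm V \<le> v0" and v0: "0 < v0"
  obtains w where "norm w = 1" "w \<bullet> P > p0" "w \<bullet> V > - v0"
proof (cases "P = 0")
  case True
  then have p0: "p0 < 0" using pP by simp
  show ?thesis
  proof (cases "V = 0")
    case True
    define b :: "real^'s" where "b = (SOME b. b \<in> Basis)"
    have "b \<in> Basis" unfolding b_def by (rule someI_ex) (use nonempty_Basis in blast)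
    then have "norm b = 1" by simp
    then show ?thesis using that[of b] \<open>P = 0\<close> \<open>V = 0\<close> p0 v0 by simp
  next
    case False
    have "norm (sgn V) = 1" using False by (simp add: norm_sgn)
    moreover have "sgn V \<bullet> V = norm V" using False
      by (simp add: sgn_div_norm dot_square_norm power2_eq_square)
    moreover have "- v0 < norm V" using v0 norm_ge_zero[of V] by linarith
    ultimately show ?thesis using that[of "sgn V"] \<open>P = 0\<close> p0 by simp
  qed
next
  case False
  define w1 where "w1 = sgn P"
  have nw1: "norm w1 = 1" using False by (simp add: w1_def norm_sgn)
  have w1P: "w1 \<bullet> P = norm P" using False
    by (simp add: w1_def sgn_div_norm dot_square_norm power2_eq_square)
  have Pw: "P = norm P *\<^sub>R w1" using False by (simp add: w1_def sgn_div_norm)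
  have ww1: "w1 \<bullet> w1 = 1" using nw1 by (simp add: dot_square_norm)
  show ?thesis
  proof (cases "w1 \<bullet> V > - v0")
    case True
    then show ?thesis using that[of w1] nw1 w1P pP by simp
  next
    case bad: False
    have cs: "- (w1 \<bullet> V) \<le> norm V"
      using norm_cauchy_schwarz[of "- w1" V] nw1 by simp
    have eq1: "w1 \<bullet> V = - v0" using bad cs VV by linarith
    have eq2: "norm V = v0" using bad cs VV by linarith
    have eq1': "V \<bullet> w1 = - v0" using eq1 by (simp add: inner_commute)
    have "(norm (V + v0 *\<^sub>R w1))^2 = 0"
      by (simp add: power2_norm_eq_inner inner_add_left inner_add_right inner_commute eq1 ww1)
         (simp add: dot_square_norm eq2 eq1' power2_eq_square)
    then have Vw: "V = - v0 *\<^sub>R w1"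
      by (simp add: eq_neg_iff_add_eq_0)
    have "DIM(real^'s) \<ge> 2" using card by simp
    then obtain e0 where e0: "e0 \<noteq> 0" "orthogonal w1 e0"
      using orthogonal_to_vector_exists by blast
    define e where "e = sgn e0"
    have ne: "norm e = 1" using e0 by (simp add: e_def norm_sgn)
    have ee: "e \<bullet> e = 1" using ne by (simp add: dot_square_norm)
    have ew: "w1 \<bullet> e = 0" using e0 by (simp add: e_def orthogonal_def sgn_div_norm)
    have ew': "e \<bullet> w1 = 0" using ew by (simp add: inner_commute)
    define k where "k = p0 / norm P"
    have k1: "k < 1" unfolding k_def using pP False by simp
    define c where "c = (max k (-1) + 1) / 2"
    have c0: "0 \<le> c" "c < 1" "k < c" unfolding c_def using k1 by auto
    define s where "s = sqrt (1 - c^2)"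
    have s2: "s^2 = 1 - c^2" unfolding s_def using c0
      by (simp add: abs_square_le_1)
    define w where "w = c *\<^sub>R w1 + s *\<^sub>R e"
    have "w \<bullet> w = c^2 + s^2"
      by (simp add: w_def inner_add_left inner_add_right ww1 ee ew ew' power2_eq_square)
    then have nw: "norm w = 1" using s2 by (simp add: norm_eq_sqrt_inner)
    have ww: "w \<bullet> w1 = c" by (simp add: w_def inner_add_left ww1 ew')
    have wP: "w \<bullet> P = c * norm P"
      by (subst Pw) (simp add: ww)
    have wV: "w \<bullet> V = - v0 * c"
      by (simp add: Vw ww)
    have "p0 < c * norm P"
    proof -
      have "p0 = k * norm P" unfolding k_def using False by simp
      also have "\<dots> < c * norm P" using c0 False by simp
      finally show ?thesis .
    qed
    moreover have "- v0 * c > - v0" using c0 v0 by simp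
    ultimately show ?thesis using that[of w] nw wP wV by simp
  qed
qed



theorem lemma3p3p4:
  fixes L :: "('l, 'm) monoid_scheme"
    and pi :: "'l \<Rightarrow> real^('s::finite option)^('s option)"
    and rho :: "'l \<Rightarrow> 'a::euclidean_space \<Rightarrow> 'a"
    and br :: "'a \<Rightarrow> 'a \<Rightarrow> real^('s option)"
  assumes D: "CARD('s) + 1 \<ge> 4"
    and L_group: "group L"
    and pi_into: "\<And>g. g \<in> carrier L \<Longrightarrow> pi g \<in> SO0"
    and pi_mult: "\<And>g h. g \<in> carrier L \<Longrightarrow> h \<in> carrier L \<Longrightarrow> pi (g \<otimes>\<^bsub>L\<^esub> h) = pi g ** pi h"
    and pi_onto: "pi ` carrier L = SO0"
    and rho_lin: "\<And>g. g \<in> carrier L \<Longrightarrow> linear (rho g) \<and> bij (rho g)"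
    and rho_mult: "\<And>g h. g \<in> carrier L \<Longrightarrow> h \<in> carrier L \<Longrightarrow> rho (g \<otimes>\<^bsub>L\<^esub> h) = rho g \<circ> rho h"
    and rho_one: "rho \<one>\<^bsub>L\<^esub> = id"
    and br_bil: "bilinear br"
    and br_sym: "\<And>X Y. br X Y = br Y X"
    and br_equiv: "\<And>g X Y. g \<in> carrier L \<Longrightarrow> br (rho g X) (rho g Y) = pi g *v br X Y"
    and br_pos: "\<And>X x. X \<noteq> 0 \<Longrightarrow> x \<in> Gamma_plus \<Longrightarrow> mink (br X X) x > 0"
  shows "(\<forall>p. (\<forall>X. Phi br p X X \<ge> 0) \<longleftrightarrow> (p $ None \<ge> 0 \<and> mink p p \<ge> 0))
         \<and> (\<forall>p. p $ None > 0 \<and> mink p p > 0 \<longrightarrow> (\<forall>X. X \<noteq> 0 \<longrightarrow> Phi br p X X > 0))"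
  proof -
  have Phi_eq: "Phi br p X X = (1/2) * mink (br X X) p" for p X by (simp add: Phi_def)
  have br0: "br 0 0 = 0" using bilinear_lzero[OF br_bil] .
  have mink0: "mink 0 p = 0" for p :: "real^('s option)" by (simp add: mink_def)
  have pos: "\<forall>x\<in>Gamma_plus. mink (br X X) x > 0" if "X \<noteq> 0" for X
    using br_pos that by blast
  have card: "CARD('s) \<ge> 2" using D by simp
  have dirA: "\<forall>X. Phi br p X X \<ge> 0" if "p $ None \<ge> 0" "mink p p \<ge> 0" for p
  proof
    fix X
    show "Phi br p X X \<ge> 0"
    proof (cases "X = 0")
      case True
      then show ?thesis by (simp add: Phi_eq br0 mink0)
    next
      case False
      then show ?thesis using gamma_dir[OF pos[OF False] that] by (simp add: Phi_eq)
    qed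
  qed
  have dirB: "p $ None \<ge> 0 \<and> mink p p \<ge> 0" if H: "\<forall>X. Phi br p X X \<ge> 0" for p
  proof (rule ccontr)
    assume nG: "\<not> (p $ None \<ge> 0 \<and> mink p p \<ge> 0)"
    define P where "P = spat p"
    define p0 where "p0 = p $ None"
    have pP: "p0 < norm P"
    proof (cases "p0 < 0")
      case True
      then show ?thesis using norm_ge_zero[of P] by linarith
    next
      case False
      then have "mink p p < 0" using nG p0_def by auto
      then have "p0^2 < (norm P)^2" by (simp add: mink_alt p0_def P_def dot_square_norm power2_eq_square)
      then show ?thesis using False by (metis norm_ge_zero power_less_imp_less_base)
    qed
    define X0 :: 'a where "X0 = (SOME b. b \<in> Basis)"
    have "X0 \<in> Basis" unfolding X0_def by (rule someI_ex) (use nonempty_Basis in blast)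
    then have X0nz: "X0 \<noteq> 0" by (rule nonzero_Basis)
    define v where "v = br X0 X0"
    have vpos: "\<forall>x\<in>Gamma_plus. mink v x > 0" unfolding v_def using pos[OF X0nz] .
    define V where "V = spat v"
    define v0 where "v0 = v $ None"
    have v0pos: "v0 > 0" and VV: "norm V \<le> v0"
      using cone_props[OF vpos] unfolding V_def v0_def by auto
    obtain w where nw: "norm w = 1" and wP: "w \<bullet> P > p0" and wV: "w \<bullet> V > - v0"
      using choose_w[OF card pP VV v0pos] by blast
    define a where "a = w \<bullet> P"
    define b where "b = w \<bullet> V"
    define A where "A = v0 * p0 - a * b"
    define C where "C = a * b - V \<bullet> P"
    define d where "d = - ((v0 + b) * (p0 - a))"
    have dpos: "d > 0" unfolding d_def using wP wV a_def b_def
      by (simp add: mult_pos_neg)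
    define t where "t = (\<bar>A\<bar> + \<bar>C\<bar> + 1) / d"
    have t0: "t \<ge> 0" unfolding t_def using dpos by simp
    have td: "t * d = \<bar>A\<bar> + \<bar>C\<bar> + 1" unfolding t_def using dpos by simp
    define q where "q = t *\<^sub>R w"
    have qq: "q \<bullet> q = t^2" using nw by (simp add: q_def dot_square_norm power2_eq_square)
    have g1: "gam q \<ge> 1" by (rule gam_ge1)
    have gt: "(gam q)^2 = 1 + t^2" using gam_sq[of q] qq by simp
    have "mink (bmat q *v v) p = (gam q * v0 + t * b) * p0 - (V \<bullet> P + (v0 + (t * b)/(gam q + 1)) * (t * a))"
      by (simp add: mink_bmat q_def a_def b_def v0_def p0_def V_def P_def)
    also have "\<dots> \<le> t * ((v0 + b) * (p0 - a)) + \<bar>A\<bar> + \<bar>C\<bar>"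
      unfolding A_def C_def by (rule bound_lemma[OF g1 gt t0])
    also have "\<dots> = -1"
    proof -
      have "t * ((v0 + b) * (p0 - a)) = - (t * d)" by (simp add: d_def)
      then show ?thesis using td by simp
    qed
    finally have neg: "mink (bmat q *v v) p < 0" by simp
    have "bmat q \<in> pi ` carrier L" using bmat_SO0 pi_onto by simp
    then obtain g where g: "g \<in> carrier L" "pi g = bmat q" by auto
    have "br (rho g X0) (rho g X0) = bmat q *v v" using br_equiv[OF g(1)] g(2) v_def by simp
    then have "Phi br p (rho g X0) (rho g X0) < 0" using neg by (simp add: Phi_eq)
    then show False using H by (meson not_le)
  qed
  show ?thesis
  proof (intro conjI allI impI)
    fix p :: "real^('s option)"
    show "(\<forall>X. Phi br p X X \<ge> 0) \<longleftrightarrow> (p $ None \<ge> 0 \<and> mink p p \<ge> 0)"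
      using dirA dirB by blast
  next
    fix p :: "real^('s option)" and X :: 'a
    assume "p $ None > 0 \<and> mink p p > 0" "X \<noteq> 0"
    then have "p \<in> Gamma_plus" by (simp add: Gamma_plus_def)
    then show "Phi br p X X > 0" using br_pos \<open>X \<noteq> 0\<close> by (simp add: Phi_eq)
  qed
qed

end
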